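(* Let $n\ge4$, let $A_1,\dots,A_n$ be (not necessarily distinct) points in $\mathbb{R}^m$, set $A_{n+1}=A_1$, and for $i\ne j$ let $M_{ij}$ be the midpoint of the segment $A_iA_j$. For $1\le i<j\le n$ let $$c_{ij}=\sum_{r=0}^{2}(-1)^{r+1}\binom{n-j+i-1}{2-r}\binom{j-i-1}{r}.$$ Then $$\binom{n-2}{2}\sum_{i=1}^n|A_iA_{i+1}|^2=\sum_{\substack{1\le i<j\le n\\ 1<j-i<n-1}}c_{ij}|A_iA_j|^2+\sum_{1\le i<j<k<l\le n}4|M_{ik}M_{jl}|^2.$$ For $n=4$ this reduces to $|A_1A_2|^2+|A_2A_3|^2+|A_3A_4|^2+|A_4A_1|^2=|A_1A_3|^2+|A_2A_4|^2+4|M_{13}M_{24}|^2$.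
   Context: $|XY|$ denotes the Euclidean distance in $\mathbb{R}^m$. Binomial coefficients $\binom{a}{b}$ are $0$ when $b>a$ or $b<0$. *)

theory Defs
  imports "HOL-Analysis.Analysis"
begin

definition cij :: "nat \<Rightarrow> nat \<Rightarrow> nat \<Rightarrow> real" where
  "cij n i j = (\<Sum>r\<in>{0..2::nat}. (-1) ^ (r + 1) *
      real ((n - j + i - 1) choose (2 - r)) * real ((j - i - 1) choose r))"

end

theory Submission
  imports Defs
begin

lemma mid4:
  fixes a b c d :: "'a::euclidean_space"
  shows "4 * (dist (midpoint a b) (midpoint c d))\<^sup>2 =
    (dist a c)\<^sup>2 + (dist a d)\<^sup>2 + (dist b c)\<^sup>2 + (dist b d)\<^sup>2 - (dist a b)\<^sup>2 - (dist c d)\<^sup>2"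
  unfolding dist_norm midpoint_def power2_norm_eq_inner
  by (simp add: inner_simps algebra_simps)

lemma cnt1:
  assumes "b \<le> n + 1"
  shows "(\<Sum>x\<in>{1..n}. of_bool (a < x \<and> x < b) :: real) = real (b - a - 1)"
proof -
  have "{1..n} \<inter> {x. a < x \<and> x < b} = {a<..<b}" using assms by auto
  then show ?thesis by simp
qed

lemma cnt2:
  assumes "b \<le> n + 1"
  shows "(\<Sum>x\<in>{1..n}. \<Sum>y\<in>{1..n}. of_bool (a < x \<and> x < y \<and> y < b) :: real)
     = real ((b - a - 1) choose 2)"
  using assms
proof (induction b)
  case 0
  then show ?case by simp
next
  case (Suc b)
  have "(\<Sum>x\<in>{1..n}. \<Sum>y\<in>{1..n}. of_bool (a < x \<and> x < y \<and> y < Suc b) :: real)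
    = (\<Sum>x\<in>{1..n}. \<Sum>y\<in>{1..n}. of_bool (a < x \<and> x < y \<and> y < b) + of_bool (a < x \<and> x < b) * of_bool (y = b))"
    by (intro sum.cong refl) auto
  also have "\<dots> = (\<Sum>x\<in>{1..n}. \<Sum>y\<in>{1..n}. of_bool (a < x \<and> x < y \<and> y < b) :: real)
     + (\<Sum>x\<in>{1..n}. of_bool (a < x \<and> x < b))"
    using Suc.prems by (simp add: sum.distrib sum_distrib_left[symmetric])
  also have "\<dots> = real ((b - a - 1) choose 2) + real (b - a - 1)"
    using Suc cnt1[of b n a] by simp
  also have "\<dots> = real ((Suc b - a - 1) choose 2)"
  proof (cases "b \<le> a")
    case True then show ?thesis by simp
  next
    case False
    then have "Suc b - a - 1 = Suc (b - a - 1)" by simp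
    then show ?thesis by (simp add: numeral_2_eq_2)
  qed
  finally show ?case .
qed

lemma swap3: "(\<Sum>j\<in>A. \<Sum>k\<in>B. \<Sum>l\<in>C. h j k l) = (\<Sum>l\<in>C. \<Sum>j\<in>A. \<Sum>k\<in>B. h j k l)"
proof -
  have "(\<Sum>j\<in>A. \<Sum>k\<in>B. \<Sum>l\<in>C. h j k l) = (\<Sum>j\<in>A. \<Sum>l\<in>C. \<Sum>k\<in>B. h j k l)"
    by (rule sum.cong[OF refl], rule sum.swap)
  also have "\<dots> = (\<Sum>l\<in>C. \<Sum>j\<in>A. \<Sum>k\<in>B. h j k l)" by (rule sum.swap)
  finally show ?thesis .
qed

lemma swap22: "(\<Sum>a\<in>A. \<Sum>b\<in>B. \<Sum>c\<in>C. \<Sum>d\<in>D. h a b c d) = (\<Sum>c\<in>C. \<Sum>d\<in>D. \<Sum>a\<in>A. \<Sum>b\<in>B. h a b c d)"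
proof -
  have "(\<Sum>a\<in>A. \<Sum>b\<in>B. \<Sum>c\<in>C. \<Sum>d\<in>D. h a b c d) = (\<Sum>a\<in>A. \<Sum>c\<in>C. \<Sum>b\<in>B. \<Sum>d\<in>D. h a b c d)"
    by (rule sum.cong[OF refl], rule sum.swap)
  also have "\<dots> = (\<Sum>c\<in>C. \<Sum>a\<in>A. \<Sum>b\<in>B. \<Sum>d\<in>D. h a b c d)" by (rule sum.swap)
  also have "\<dots> = (\<Sum>c\<in>C. \<Sum>d\<in>D. \<Sum>a\<in>A. \<Sum>b\<in>B. h a b c d)"
    by (rule sum.cong[OF refl], rule swap3)
  finally show ?thesis .
qed

lemma pairs_sum:
  fixes f :: "'b \<Rightarrow> 'c \<Rightarrow> real"
  assumes "\<And>p q. P p q \<Longrightarrow> p \<in> A \<and> q \<in> B" "finite A" "finite B"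
  shows "(\<Sum>(p,q)\<in>{(p,q). P p q}. f p q) = (\<Sum>p\<in>A. \<Sum>q\<in>B. of_bool (P p q) * f p q)"
proof -
  have "{(p,q). P p q} = {x \<in> A \<times> B. case_prod P x}" using assms(1) by auto
  then have "(\<Sum>(p,q)\<in>{(p,q). P p q}. f p q) = (\<Sum>x\<in>A \<times> B. if case_prod P x then case_prod f x else 0)"
    using assms by (simp add: sum.inter_filter)
  also have "\<dots> = (\<Sum>(p,q)\<in>A \<times> B. of_bool (P p q) * f p q)"
    by (rule sum.cong) auto
  also have "\<dots> = (\<Sum>p\<in>A. \<Sum>q\<in>B. of_bool (P p q) * f p q)"
    by (simp only: sum.cartesian_product)
  finally show ?thesis .
qed

lemma quads_sum:
  fixes f :: "'b \<Rightarrow> 'b \<Rightarrow> 'b \<Rightarrow> 'b \<Rightarrow> real"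
  assumes "\<And>i j k l. P i j k l \<Longrightarrow> i \<in> A \<and> j \<in> A \<and> k \<in> A \<and> l \<in> A" "finite A"
  shows "(\<Sum>(i,j,k,l)\<in>{(i,j,k,l). P i j k l}. f i j k l)
    = (\<Sum>i\<in>A. \<Sum>j\<in>A. \<Sum>k\<in>A. \<Sum>l\<in>A. of_bool (P i j k l) * f i j k l)"
proof -
  have "{(i,j,k,l). P i j k l} = {x \<in> A \<times> A \<times> A \<times> A. (\<lambda>(i,j,k,l). P i j k l) x}" using assms(1) by auto
  then have "(\<Sum>(i,j,k,l)\<in>{(i,j,k,l). P i j k l}. f i j k l) = (\<Sum>x\<in>A \<times> A \<times> A \<times> A. if (\<lambda>(i,j,k,l). P i j k l) x then (\<lambda>(i,j,k,l). f i j k l) x else 0)"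
    using assms by (simp add: sum.inter_filter)
  also have "\<dots> = (\<Sum>(i,j,k,l)\<in>A \<times> A \<times> A \<times> A. of_bool (P i j k l) * f i j k l)"
    by (rule sum.cong) auto
  also have "\<dots> = (\<Sum>i\<in>A. \<Sum>j\<in>A. \<Sum>k\<in>A. \<Sum>l\<in>A. of_bool (P i j k l) * f i j k l)"
    by (simp only: sum.cartesian_product)
  finally show ?thesis .
qed

lemma T1:
  fixes D :: "nat \<Rightarrow> nat \<Rightarrow> real"
  shows "(\<Sum>i\<in>{1..n}. \<Sum>j\<in>{1..n}. \<Sum>k\<in>{1..n}. \<Sum>l\<in>{1..n}. of_bool (i<j \<and> j<k \<and> k<l) * D i j)
   = (\<Sum>p\<in>{1..n}. \<Sum>q\<in>{1..n}. D p q * (of_bool (p<q) * real ((n-q) choose 2)))"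
proof -
  have inner: "(\<Sum>k\<in>{1..n}. \<Sum>l\<in>{1..n}. of_bool (p<q \<and> q<k \<and> k<l) :: real) = of_bool (p<q) * real ((n-q) choose 2)" for p q
  proof -
    have "(\<Sum>k\<in>{1..n}. \<Sum>l\<in>{1..n}. of_bool (p<q \<and> q<k \<and> k<l) :: real)
      = (\<Sum>k\<in>{1..n}. \<Sum>l\<in>{1..n}. of_bool (p<q) * of_bool (q<k \<and> k<l \<and> l < n+1))"
      by (intro sum.cong refl) auto
    also have "\<dots> = of_bool (p<q) * real ((n + 1 - q - 1) choose 2)"
      using cnt2[of "n+1" n q] by (simp add: sum_distrib_left[symmetric])
    finally show ?thesis by simp
  qed
  have "(\<Sum>i\<in>{1..n}. \<Sum>j\<in>{1..n}. \<Sum>k\<in>{1..n}. \<Sum>l\<in>{1..n}. of_bool (i<j \<and> j<k \<and> k<l) * D i j)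
    = (\<Sum>i\<in>{1..n}. \<Sum>j\<in>{1..n}. D i j * (\<Sum>k\<in>{1..n}. \<Sum>l\<in>{1..n}. of_bool (i<j \<and> j<k \<and> k<l)))"
    by (simp add: sum_distrib_left mult.commute)
  then show ?thesis by (simp only: inner)
qed

lemma T2:
  fixes D :: "nat \<Rightarrow> nat \<Rightarrow> real"
  shows "(\<Sum>i\<in>{1..n}. \<Sum>j\<in>{1..n}. \<Sum>k\<in>{1..n}. \<Sum>l\<in>{1..n}. of_bool (i<j \<and> j<k \<and> k<l) * D i l)
   = (\<Sum>p\<in>{1..n}. \<Sum>q\<in>{1..n}. D p q * (of_bool (p<q) * real ((q-p-1) choose 2)))"
proof -
  have inner: "q \<in> {1..n} \<Longrightarrow> (\<Sum>j\<in>{1..n}. \<Sum>k\<in>{1..n}. of_bool (p<j \<and> j<k \<and> k<q) :: real) = of_bool (p<q) * real ((q-p-1) choose 2)" for p q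
    using cnt2[of q n p] by (cases "p < q") auto
  have "(\<Sum>i\<in>{1..n}. \<Sum>j\<in>{1..n}. \<Sum>k\<in>{1..n}. \<Sum>l\<in>{1..n}. of_bool (i<j \<and> j<k \<and> k<l) * D i l)
    = (\<Sum>i\<in>{1..n}. \<Sum>l\<in>{1..n}. \<Sum>j\<in>{1..n}. \<Sum>k\<in>{1..n}. of_bool (i<j \<and> j<k \<and> k<l) * D i l)"
    by (rule sum.cong[OF refl], rule swap3)
  also have "\<dots> = (\<Sum>i\<in>{1..n}. \<Sum>l\<in>{1..n}. D i l * (\<Sum>j\<in>{1..n}. \<Sum>k\<in>{1..n}. of_bool (i<j \<and> j<k \<and> k<l)))"
    by (simp add: sum_distrib_left mult.commute)
  also have "\<dots> = (\<Sum>p\<in>{1..n}. \<Sum>q\<in>{1..n}. D p q * (of_bool (p<q) * real ((q-p-1) choose 2)))"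
    by (intro sum.cong refl) (simp only: inner)
  finally show ?thesis .
qed

lemma T3:
  fixes D :: "nat \<Rightarrow> nat \<Rightarrow> real"
  shows "(\<Sum>i\<in>{1..n}. \<Sum>j\<in>{1..n}. \<Sum>k\<in>{1..n}. \<Sum>l\<in>{1..n}. of_bool (i<j \<and> j<k \<and> k<l) * D j k)
   = (\<Sum>p\<in>{1..n}. \<Sum>q\<in>{1..n}. D p q * (of_bool (p<q) * (real (p-1) * real (n-q))))"
proof -
  have inner: "p \<in> {1..n} \<Longrightarrow> (\<Sum>i\<in>{1..n}. \<Sum>l\<in>{1..n}. of_bool (i<p \<and> p<q \<and> q<l) :: real) = of_bool (p<q) * (real (p-1) * real (n-q))" for p q
  proof -
    assume p: "p \<in> {1..n}"
    have "(\<Sum>i\<in>{1..n}. \<Sum>l\<in>{1..n}. of_bool (i<p \<and> p<q \<and> q<l) :: real)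
      = (\<Sum>i\<in>{1..n}. \<Sum>l\<in>{1..n}. of_bool (p<q) * (of_bool (0<i \<and> i<p) * of_bool (q<l \<and> l < n+1)))"
      by (intro sum.cong refl) auto
    also have "\<dots> = of_bool (p<q) * (\<Sum>i\<in>{1..n}. \<Sum>l\<in>{1..n}. (of_bool (0<i \<and> i<p) * of_bool (q<l \<and> l < n+1)))"
      by (simp only: sum_distrib_left)
    also have "\<dots> = of_bool (p<q) * ((\<Sum>i\<in>{1..n}. of_bool (0<i \<and> i<p)) * (\<Sum>l\<in>{1..n}. of_bool (q<l \<and> l < n+1)))"
      by (simp only: sum_product)
    also have "\<dots> = of_bool (p<q) * (real (p-0-1) * real (n+1-q-1))"
      using cnt1[of p n 0] cnt1[of "n+1" n q] p by simp
    finally show ?thesis by simp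
  qed
  have "(\<Sum>i\<in>{1..n}. \<Sum>j\<in>{1..n}. \<Sum>k\<in>{1..n}. \<Sum>l\<in>{1..n}. of_bool (i<j \<and> j<k \<and> k<l) * D j k)
    = (\<Sum>j\<in>{1..n}. \<Sum>i\<in>{1..n}. \<Sum>k\<in>{1..n}. \<Sum>l\<in>{1..n}. of_bool (i<j \<and> j<k \<and> k<l) * D j k)"
    by (rule sum.swap)
  also have "\<dots> = (\<Sum>j\<in>{1..n}. \<Sum>k\<in>{1..n}. \<Sum>i\<in>{1..n}. \<Sum>l\<in>{1..n}. of_bool (i<j \<and> j<k \<and> k<l) * D j k)"
    by (rule sum.cong[OF refl], rule sum.swap)
  also have "\<dots> = (\<Sum>j\<in>{1..n}. \<Sum>k\<in>{1..n}. D j k * (\<Sum>i\<in>{1..n}. \<Sum>l\<in>{1..n}. of_bool (i<j \<and> j<k \<and> k<l)))"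
    by (simp add: sum_distrib_left mult.commute)
  also have "\<dots> = (\<Sum>p\<in>{1..n}. \<Sum>q\<in>{1..n}. D p q * (of_bool (p<q) * (real (p-1) * real (n-q))))"
    by (intro sum.cong refl) (simp only: inner)
  finally show ?thesis .
qed

lemma T4:
  fixes D :: "nat \<Rightarrow> nat \<Rightarrow> real"
  shows "(\<Sum>i\<in>{1..n}. \<Sum>j\<in>{1..n}. \<Sum>k\<in>{1..n}. \<Sum>l\<in>{1..n}. of_bool (i<j \<and> j<k \<and> k<l) * D k l)
   = (\<Sum>p\<in>{1..n}. \<Sum>q\<in>{1..n}. D p q * (of_bool (p<q) * real ((p-1) choose 2)))"
proof -
  have inner: "p \<in> {1..n} \<Longrightarrow> (\<Sum>i\<in>{1..n}. \<Sum>j\<in>{1..n}. of_bool (i<j \<and> j<p \<and> p<q) :: real) = of_bool (p<q) * real ((p-1) choose 2)" for p q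
  proof -
    assume p: "p \<in> {1..n}"
    have "(\<Sum>i\<in>{1..n}. \<Sum>j\<in>{1..n}. of_bool (i<j \<and> j<p \<and> p<q) :: real)
      = (\<Sum>i\<in>{1..n}. \<Sum>j\<in>{1..n}. of_bool (p<q) * of_bool (0<i \<and> i<j \<and> j<p))"
      by (intro sum.cong refl) auto
    also have "\<dots> = of_bool (p<q) * real ((p-0-1) choose 2)"
      using cnt2[of p n 0] p by (simp add: sum_distrib_left[symmetric])
    finally show ?thesis by simp
  qed
  have "(\<Sum>i\<in>{1..n}. \<Sum>j\<in>{1..n}. \<Sum>k\<in>{1..n}. \<Sum>l\<in>{1..n}. of_bool (i<j \<and> j<k \<and> k<l) * D k l)
    = (\<Sum>k\<in>{1..n}. \<Sum>l\<in>{1..n}. \<Sum>i\<in>{1..n}. \<Sum>j\<in>{1..n}. of_bool (i<j \<and> j<k \<and> k<l) * D k l)"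
    by (rule swap22)
  also have "\<dots> = (\<Sum>k\<in>{1..n}. \<Sum>l\<in>{1..n}. D k l * (\<Sum>i\<in>{1..n}. \<Sum>j\<in>{1..n}. of_bool (i<j \<and> j<k \<and> k<l)))"
    by (simp add: sum_distrib_left mult.commute)
  also have "\<dots> = (\<Sum>p\<in>{1..n}. \<Sum>q\<in>{1..n}. D p q * (of_bool (p<q) * real ((p-1) choose 2)))"
    by (intro sum.cong refl) (simp only: inner)
  finally show ?thesis .
qed

lemma T5:
  fixes D :: "nat \<Rightarrow> nat \<Rightarrow> real"
  shows "(\<Sum>i\<in>{1..n}. \<Sum>j\<in>{1..n}. \<Sum>k\<in>{1..n}. \<Sum>l\<in>{1..n}. of_bool (i<j \<and> j<k \<and> k<l) * D i k)
   = (\<Sum>p\<in>{1..n}. \<Sum>q\<in>{1..n}. D p q * (of_bool (p<q) * (real (q-p-1) * real (n-q))))"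
proof -
  have inner: "q \<in> {1..n} \<Longrightarrow> (\<Sum>j\<in>{1..n}. \<Sum>l\<in>{1..n}. of_bool (p<j \<and> j<q \<and> q<l) :: real) = of_bool (p<q) * (real (q-p-1) * real (n-q))" for p q
  proof -
    assume q: "q \<in> {1..n}"
    have "(\<Sum>j\<in>{1..n}. \<Sum>l\<in>{1..n}. of_bool (p<j \<and> j<q \<and> q<l) :: real)
      = (\<Sum>j\<in>{1..n}. \<Sum>l\<in>{1..n}. (of_bool (p<j \<and> j<q) * of_bool (q<l \<and> l < n+1)))"
      by (intro sum.cong refl) auto
    also have "\<dots> = ((\<Sum>j\<in>{1..n}. of_bool (p<j \<and> j<q)) * (\<Sum>l\<in>{1..n}. of_bool (q<l \<and> l < n+1)))"
      by (simp only: sum_product)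
    also have "\<dots> = (real (q-p-1) * real (n+1-q-1))"
      using cnt1[of q n p] cnt1[of "n+1" n q] q by simp
    finally show ?thesis by (cases "p<q") auto
  qed
  have "(\<Sum>i\<in>{1..n}. \<Sum>j\<in>{1..n}. \<Sum>k\<in>{1..n}. \<Sum>l\<in>{1..n}. of_bool (i<j \<and> j<k \<and> k<l) * D i k)
    = (\<Sum>i\<in>{1..n}. \<Sum>k\<in>{1..n}. \<Sum>j\<in>{1..n}. \<Sum>l\<in>{1..n}. of_bool (i<j \<and> j<k \<and> k<l) * D i k)"
    by (rule sum.cong[OF refl], rule sum.swap)
  also have "\<dots> = (\<Sum>i\<in>{1..n}. \<Sum>k\<in>{1..n}. D i k * (\<Sum>j\<in>{1..n}. \<Sum>l\<in>{1..n}. of_bool (i<j \<and> j<k \<and> k<l)))"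
    by (simp add: sum_distrib_left mult.commute)
  also have "\<dots> = (\<Sum>p\<in>{1..n}. \<Sum>q\<in>{1..n}. D p q * (of_bool (p<q) * (real (q-p-1) * real (n-q))))"
    by (intro sum.cong refl) (simp only: inner)
  finally show ?thesis .
qed

lemma T6:
  fixes D :: "nat \<Rightarrow> nat \<Rightarrow> real"
  shows "(\<Sum>i\<in>{1..n}. \<Sum>j\<in>{1..n}. \<Sum>k\<in>{1..n}. \<Sum>l\<in>{1..n}. of_bool (i<j \<and> j<k \<and> k<l) * D j l)
   = (\<Sum>p\<in>{1..n}. \<Sum>q\<in>{1..n}. D p q * (of_bool (p<q) * (real (p-1) * real (q-p-1))))"
proof -
  have inner: "p \<in> {1..n} \<Longrightarrow> q \<in> {1..n} \<Longrightarrow> (\<Sum>i\<in>{1..n}. \<Sum>k\<in>{1..n}. of_bool (i<p \<and> p<k \<and> k<q) :: real) = of_bool (p<q) * (real (p-1) * real (q-p-1))" for p q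
  proof -
    assume p: "p \<in> {1..n}" and q: "q \<in> {1..n}"
    have "(\<Sum>i\<in>{1..n}. \<Sum>k\<in>{1..n}. of_bool (i<p \<and> p<k \<and> k<q) :: real)
      = (\<Sum>i\<in>{1..n}. \<Sum>k\<in>{1..n}. (of_bool (0<i \<and> i<p) * of_bool (p<k \<and> k<q)))"
      by (intro sum.cong refl) auto
    also have "\<dots> = ((\<Sum>i\<in>{1..n}. of_bool (0<i \<and> i<p)) * (\<Sum>k\<in>{1..n}. of_bool (p<k \<and> k<q)))"
      by (simp only: sum_product)
    also have "\<dots> = (real (p-0-1) * real (q-p-1))"
      using cnt1[of p n 0] cnt1[of q n p] p q by simp
    finally show ?thesis by (cases "p<q") auto
  qed
  have "(\<Sum>i\<in>{1..n}. \<Sum>j\<in>{1..n}. \<Sum>k\<in>{1..n}. \<Sum>l\<in>{1..n}. of_bool (i<j \<and> j<k \<and> k<l) * D j l)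
    = (\<Sum>j\<in>{1..n}. \<Sum>i\<in>{1..n}. \<Sum>k\<in>{1..n}. \<Sum>l\<in>{1..n}. of_bool (i<j \<and> j<k \<and> k<l) * D j l)"
    by (rule sum.swap)
  also have "\<dots> = (\<Sum>j\<in>{1..n}. \<Sum>l\<in>{1..n}. \<Sum>i\<in>{1..n}. \<Sum>k\<in>{1..n}. of_bool (i<j \<and> j<k \<and> k<l) * D j l)"
    by (rule sum.cong[OF refl], rule swap3)
  also have "\<dots> = (\<Sum>j\<in>{1..n}. \<Sum>l\<in>{1..n}. D j l * (\<Sum>i\<in>{1..n}. \<Sum>k\<in>{1..n}. of_bool (i<j \<and> j<k \<and> k<l)))"
    by (simp add: sum_distrib_left mult.commute)
  also have "\<dots> = (\<Sum>p\<in>{1..n}. \<Sum>q\<in>{1..n}. D p q * (of_bool (p<q) * (real (p-1) * real (q-p-1))))"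
    by (intro sum.cong refl) (simp only: inner)
  finally show ?thesis .
qed

lemma ch2: "real (m choose 2) = real m * (real m - 1) / 2"
  by (induction m) (auto simp: numeral_2_eq_2 field_simps)

lemma cij_eq: "cij n p q = - real ((n - q + p - 1) choose 2) + real (n - q + p - 1) * real (q - p - 1)
   - real ((q - p - 1) choose 2)"
  by (simp add: cij_def numeral_2_eq_2 atLeast0_atMost_Suc)

lemma coef:
  assumes "1 \<le> p" "p < q" "q \<le> n" "4 \<le> n"
  shows "of_bool (1 < q - p \<and> q - p < n - 1) * cij n p q
    + (real ((n-q) choose 2) + real ((q-p-1) choose 2) + real (p-1) * real (n-q) + real ((p-1) choose 2)
       - real (q-p-1) * real (n-q) - real (p-1) * real (q-p-1))
    = real ((n-2) choose 2) * (of_bool (q = p+1) + of_bool (p = 1 \<and> q = n))"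
proof -
  have r1: "real (n-q) = real n - real q" "real (p-1) = real p - 1" "real (q-p-1) = real q - real p - 1"
    "real (n - q + p - 1) = real n - real q + real p - 1" "real (n-2) = real n - 2"
    using assms by (auto simp: of_nat_diff)
  consider (a) "q = p+1" | (b) "p = 1 \<and> q = n" | (c) "1 < q - p \<and> q - p < n - 1"
    using assms by linarith
  then show ?thesis
  proof cases
    case a
    then have "\<not> (p = 1 \<and> q = n)" using assms by auto
    have f: "(of_bool (1 < q - p \<and> q - p < n - 1) :: real) = 0" "(of_bool (q = p+1) :: real) = 1"
       "(of_bool (p = 1 \<and> q = n) :: real) = 0" using a assms by auto
    have "real q = real p + 1" using a by auto
    then show ?thesis unfolding ch2 r1 f by (simp add: field_simps)
  next
    case b
    then have "q \<noteq> p+1" using assms by auto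
    moreover have "\<not> (1 < q - p \<and> q - p < n - 1)" using b assms by auto
    ultimately show ?thesis using b unfolding ch2 r1 by (simp add: field_simps)
  next
    case c
    then have "q \<noteq> p+1" "\<not> (p = 1 \<and> q = n)" using assms by auto
    have f: "(of_bool (1 < q - p \<and> q - p < n - 1) :: real) = 1" "(of_bool (q = p+1) :: real) = 0"
       "(of_bool (p = 1 \<and> q = n) :: real) = 0" using c assms by auto
    show ?thesis unfolding ch2 r1 cij_eq f by (simp add: field_simps)
  qed
qed

lemma aux: "(x::real)  *  c + e = K * (u+v) \<Longrightarrow> y = x \<Longrightarrow> w = 1 \<Longrightarrow> y * (c * d) + d * (w * e) = K * (u * d) + K * (v * d)"
proof -
  assume h: "x  *  c + e = K * (u+v)" "y = x" "w = 1"
  have "y * (c * d) + d * (w * e) = d * (x * c+e)" using h(2,3) by (simp add: algebra_simps)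
  also have "\<dots> = d * (K * (u+v))" by (simp only: h(1))
  also have "\<dots> = K * (u * d) + K * (v * d)" by (simp add: algebra_simps)
  finally show ?thesis .
qed

theorem corollary3p4:
  fixes n :: nat and A :: "nat \<Rightarrow> 'a::euclidean_space"
  assumes "n \<ge> 4"
  shows "real ((n - 2) choose 2) *
      (\<Sum>i=1..n. (dist (A i) (A (if i = n then 1 else i + 1)))\<^sup>2)
    = (\<Sum>(i, j) \<in> {(i, j). 1 \<le> i \<and> i < j \<and> j \<le> n \<and> 1 < j - i \<and> j - i < n - 1}.
         cij n i j * (dist (A i) (A j))\<^sup>2)
      + (\<Sum>(i, j, k, l) \<in> {(i, j, k, l). 1 \<le> i \<and> i < j \<and> j < k \<and> k < l \<and> l \<le> n}.
         4 * (dist (midpoint (A i) (A k)) (midpoint (A j) (A l)))\<^sup>2)"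
proof -
  define D where "D p q = (dist (A p) (A q))\<^sup>2" for p q
  define S where "S = {1..n}"
  have Dsym: "D p q = D q p" for p q unfolding D_def by (simp add: dist_commute)
  define cq where "cq p q = real ((n-q) choose 2) + real ((q-p-1) choose 2) + real (p-1) * real (n-q) + real ((p-1) choose 2)
       - real (q-p-1) * real (n-q) - real (p-1) * real (q-p-1)" for p q
  define I where "I i j k l = (of_bool (i<j \<and> j<k \<and> k<l) :: real)" for i j k l :: nat
  have "(\<Sum>(i, j, k, l) \<in> {(i, j, k, l). 1 \<le> i \<and> i < j \<and> j < k \<and> k < l \<and> l \<le> n}.
         4 * (dist (midpoint (A i) (A k)) (midpoint (A j) (A l)))\<^sup>2)
     = (\<Sum>i\<in>{1..n}. \<Sum>j\<in>{1..n}. \<Sum>k\<in>{1..n}. \<Sum>l\<in>{1..n}.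
         of_bool (1 \<le> i \<and> i < j \<and> j < k \<and> k < l \<and> l \<le> n) * (4 * (dist (midpoint (A i) (A k)) (midpoint (A j) (A l)))\<^sup>2))"
    by (rule quads_sum) auto
  also have "\<dots> = (\<Sum>i\<in>{1..n}. \<Sum>j\<in>{1..n}. \<Sum>k\<in>{1..n}. \<Sum>l\<in>{1..n}.
         I i j k l * (D i j + D i l + D j k + D k l - D i k - D j l))"
    unfolding I_def D_def by (intro sum.cong refl) (auto simp: mid4 dist_commute)
  also have "\<dots> = (\<Sum>i\<in>{1..n}. \<Sum>j\<in>{1..n}. \<Sum>k\<in>{1..n}. \<Sum>l\<in>{1..n}. I i j k l * D i j)
     + (\<Sum>i\<in>{1..n}. \<Sum>j\<in>{1..n}. \<Sum>k\<in>{1..n}. \<Sum>l\<in>{1..n}. I i j k l * D i l)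
     + (\<Sum>i\<in>{1..n}. \<Sum>j\<in>{1..n}. \<Sum>k\<in>{1..n}. \<Sum>l\<in>{1..n}. I i j k l * D j k)
     + (\<Sum>i\<in>{1..n}. \<Sum>j\<in>{1..n}. \<Sum>k\<in>{1..n}. \<Sum>l\<in>{1..n}. I i j k l * D k l)
     - (\<Sum>i\<in>{1..n}. \<Sum>j\<in>{1..n}. \<Sum>k\<in>{1..n}. \<Sum>l\<in>{1..n}. I i j k l * D i k)
     - (\<Sum>i\<in>{1..n}. \<Sum>j\<in>{1..n}. \<Sum>k\<in>{1..n}. \<Sum>l\<in>{1..n}. I i j k l * D j l)"
    by (simp only: ring_distribs sum.distrib sum_subtractf)
  also have "\<dots> = (\<Sum>p\<in>{1..n}. \<Sum>q\<in>{1..n}. D p q * (of_bool (p<q) * real ((n-q) choose 2)))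
     + (\<Sum>p\<in>{1..n}. \<Sum>q\<in>{1..n}. D p q * (of_bool (p<q) * real ((q-p-1) choose 2)))
     + (\<Sum>p\<in>{1..n}. \<Sum>q\<in>{1..n}. D p q * (of_bool (p<q) * (real (p-1) * real (n-q))))
     + (\<Sum>p\<in>{1..n}. \<Sum>q\<in>{1..n}. D p q * (of_bool (p<q) * real ((p-1) choose 2)))
     - (\<Sum>p\<in>{1..n}. \<Sum>q\<in>{1..n}. D p q * (of_bool (p<q) * (real (q-p-1) * real (n-q))))
     - (\<Sum>p\<in>{1..n}. \<Sum>q\<in>{1..n}. D p q * (of_bool (p<q) * (real (p-1) * real (q-p-1))))"
    unfolding I_def T1 T2 T3 T4 T5 T6 ..
  also have "\<dots> = (\<Sum>p\<in>{1..n}. \<Sum>q\<in>{1..n}. D p q * (of_bool (p<q) * cq p q))"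
    unfolding cq_def by (simp only: ring_distribs sum.distrib sum_subtractf)
  finally have Q: "(\<Sum>(i, j, k, l) \<in> {(i, j, k, l). 1 \<le> i \<and> i < j \<and> j < k \<and> k < l \<and> l \<le> n}.
         4 * (dist (midpoint (A i) (A k)) (midpoint (A j) (A l)))\<^sup>2)
     = (\<Sum>p\<in>{1..n}. \<Sum>q\<in>{1..n}. D p q * (of_bool (p<q) * cq p q))" .
  have P: "(\<Sum>(i, j) \<in> {(i, j). 1 \<le> i \<and> i < j \<and> j \<le> n \<and> 1 < j - i \<and> j - i < n - 1}.
         cij n i j * (dist (A i) (A j))\<^sup>2)
     = (\<Sum>p\<in>{1..n}. \<Sum>q\<in>{1..n}. of_bool (1 \<le> p \<and> p < q \<and> q \<le> n \<and> 1 < q - p \<and> q - p < n - 1) * (cij n p q * D p q))"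
    unfolding D_def by (rule pairs_sum) auto
  define K where "K = real ((n - 2) choose 2)"
  have "(\<Sum>p\<in>{1..n}. \<Sum>q\<in>{1..n}. of_bool (1 \<le> p \<and> p < q \<and> q \<le> n \<and> 1 < q - p \<and> q - p < n - 1) * (cij n p q * D p q))
     + (\<Sum>p\<in>{1..n}. \<Sum>q\<in>{1..n}. D p q * (of_bool (p<q) * cq p q))
     = (\<Sum>p\<in>{1..n}. \<Sum>q\<in>{1..n}. K * (of_bool (q = p+1) * D p q) + K * (of_bool (p = 1 \<and> q = n) * D p q))"
    unfolding sum.distrib[symmetric]
  proof (intro sum.cong refl)
    fix p q assume p: "p \<in> {1..n}" and q: "q \<in> {1..n}"
    show "of_bool (1 \<le> p \<and> p < q \<and> q \<le> n \<and> 1 < q - p \<and> q - p < n - 1) * (cij n p q * D p q)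
        + D p q * (of_bool (p<q) * cq p q)
       = K * (of_bool (q = p+1) * D p q) + K * (of_bool (p = 1 \<and> q = n) * D p q)"
    proof (cases "p < q")
      case True
      have "of_bool (1 < q - p \<and> q - p < n - 1) * cij n p q + cq p q
         = K * (of_bool (q = p+1) + of_bool (p = 1 \<and> q = n))"
        unfolding cq_def K_def using coef[of p q n] True p q assms by simp
      moreover have "(of_bool (1 \<le> p \<and> p < q \<and> q \<le> n \<and> 1 < q - p \<and> q - p < n - 1) :: real)
         = of_bool (1 < q - p \<and> q - p < n - 1)" using True p q by auto
      moreover have "(of_bool (p<q) :: real) = 1" using True by simp
      ultimately show ?thesis using aux by metis
    next
      case False
      then show ?thesis using assms by auto
    qed
  qed
  also have "\<dots> = K * (\<Sum>p\<in>{1..n}. \<Sum>q\<in>{1..n}. of_bool (q = p+1) * D p q)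
      + K * (\<Sum>p\<in>{1..n}. \<Sum>q\<in>{1..n}. of_bool (p = 1 \<and> q = n) * D p q)"
    by (simp only: sum.distrib sum_distrib_left)
  also have "(\<Sum>p\<in>{1..n}. \<Sum>q\<in>{1..n}. of_bool (q = p+1) * D p q) = (\<Sum>p\<in>{1..n}. if p < n then D p (p+1) else 0)"
  proof (intro sum.cong refl)
    fix p assume p: "p \<in> {1..n}"
    have "(\<Sum>q\<in>{1..n}. of_bool (q = p+1) * D p q) = (\<Sum>q\<in>{1..n}. if q = p+1 then D p q else 0)"
      by (intro sum.cong refl) auto
    also have "\<dots> = (if p+1 \<in> {1..n} then D p (p+1) else 0)" by (rule sum.delta) simp
    finally show "(\<Sum>q\<in>{1..n}. of_bool (q = p+1) * D p q) = (if p < n then D p (p+1) else 0)"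
      using p by auto
  qed
  also have "(\<Sum>p\<in>{1..n}. \<Sum>q\<in>{1..n}. of_bool (p = 1 \<and> q = n) * D p q) = D 1 n"
  proof -
    have "(\<Sum>p\<in>{1..n}. \<Sum>q\<in>{1..n}. of_bool (p = 1 \<and> q = n) * D p q)
       = (\<Sum>p\<in>{1..n}. if p = 1 then (\<Sum>q\<in>{1..n}. if q = n then D p q else 0) else 0)"
      by (intro sum.cong refl) auto
    also have "\<dots> = D 1 n" using assms by (simp add: sum.delta)
    finally show ?thesis .
  qed
  also have "K * (\<Sum>p\<in>{1..n}. if p < n then D p (p+1) else 0) + K * D 1 n
     = K * (\<Sum>i=1..n. D i (if i = n then 1 else i + 1))"
  proof -
    have "(\<Sum>i=1..n. D i (if i = n then 1 else i + 1))
       = (\<Sum>i=1..n. (if i < n then D i (i+1) else 0) + (if i = n then D n 1 else 0))"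
      by (intro sum.cong refl) auto
    also have "\<dots> = (\<Sum>p\<in>{1..n}. if p < n then D p (p+1) else 0) + D 1 n"
      using assms Dsym[of n 1] by (simp add: sum.distrib sum.delta)
    finally show ?thesis by (simp add: algebra_simps)
  qed
  finally show ?thesis unfolding P Q K_def D_def by simp
qed

end
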